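(* Let $(\Omega,\mathcal{F},\mathbb{P})$ be a nonatomic probability space, let $u:\mathbb{R}\to\mathbb{R}\cup\{-\infty\}$ be a utility function bounded from above, let $\alpha\in\mathbb{R}$ be such that $u(x)\ge\alpha$ for some $x\in\mathbb{R}$, and set $\mathcal{A}_u^\infty=\{X\in L^\infty: \mathbb{E}[u(X)]\ge\alpha\}$. Let $S=(S_0,S_T)$ be a traded asset with $S_T\in L^\infty$. (i) Assume $u$ never attains the value $-\infty$ and $u(x)>\alpha$ for some $x\in\mathbb{R}$. Then $\rho_{\mathcal{A}_u^\infty,S}$ is finite-valued (hence continuous) on $L^\infty$ if and only if $\mathbb{P}(S_T=0)=0$. (ii) Assume $u$ attains the value $-\infty$ or $u(x)\le\alpha$ for all $x\in\mathbb{R}$. Then $\rho_{\mathcal{A}_u^\infty,S}$ is finite-valued (hence continuous) on $L^\infty$ if and only if $\mathbb{P}(S_T\ge\varepsilon)=1$ for some $\varepsilon>0$.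
   Context: A utility function is a nonconstant, increasing, concave function $u:\mathbb{R}\to\mathbb{R}\cup\{-\infty\}$ (it is then unbounded from below). A traded asset is $S=(S_0,S_T)$ with $S_0>0$ and $S_T\ge0$ a.s., $S_T\neq0$. For $\mathcal{B}\subset L^\infty$, $\rho_{\mathcal{B},S}(X)=\inf\{m\in\mathbb{R}: X+\frac{m}{S_0}S_T\in\mathcal{B}\}$, $X\in L^\infty$. *)

theory Defs
  imports "HOL-Probability.Probability"
begin

definition nonatomic :: "'a measure \<Rightarrow> bool" where
  "nonatomic M \<longleftrightarrow> (\<forall>A\<in>sets M. measure M A > 0 \<longrightarrow>
      (\<exists>B\<in>sets M. B \<subseteq> A \<and> 0 < measure M B \<and> measure M B < measure M A))"

definition utility_function :: "(real \<Rightarrow> ereal) \<Rightarrow> bool" where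
  "utility_function u \<longleftrightarrow>
     (\<forall>x. u x \<noteq> \<infinity>) \<and> (\<exists>x y. u x \<noteq> u y) \<and> mono u \<and>
     (\<forall>x y t. 0 < t \<and> t < 1 \<longrightarrow>
        ereal t * u x + ereal (1 - t) * u y \<le> u (t * x + (1 - t) * y))"

text \<open>Representatives of L^\<infinity>: measurable, essentially bounded real functions.\<close>
definition Linf :: "'a measure \<Rightarrow> ('a \<Rightarrow> real) set" where
  "Linf M = {X. X \<in> borel_measurable M \<and> (\<exists>C. AE \<omega> in M. \<bar>X \<omega>\<bar> \<le> C)}"

definition ereal_expectation :: "'a measure \<Rightarrow> ('a \<Rightarrow> ereal) \<Rightarrow> ereal" where
  "ereal_expectation M f =
     enn2ereal (\<integral>\<^sup>+ \<omega>. e2ennreal (f \<omega>) \<partial>M) - enn2ereal (\<integral>\<^sup>+ \<omega>. e2ennreal (- f \<omega>) \<partial>M)"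

definition utility_acceptance_set ::
    "'a measure \<Rightarrow> (real \<Rightarrow> ereal) \<Rightarrow> real \<Rightarrow> ('a \<Rightarrow> real) set" where
  "utility_acceptance_set M u \<alpha> =
     {X \<in> Linf M. ereal \<alpha> \<le> ereal_expectation M (\<lambda>\<omega>. u (X \<omega>))}"

definition traded_asset :: "'a measure \<Rightarrow> real \<Rightarrow> ('a \<Rightarrow> real) \<Rightarrow> bool" where
  "traded_asset M S0 ST \<longleftrightarrow> S0 > 0 \<and> ST \<in> borel_measurable M \<and>
     (AE \<omega> in M. ST \<omega> \<ge> 0) \<and> \<not> (AE \<omega> in M. ST \<omega> = 0)"

definition rho :: "('a \<Rightarrow> real) set \<Rightarrow> real \<Rightarrow> ('a \<Rightarrow> real) \<Rightarrow> ('a \<Rightarrow> real) \<Rightarrow> ereal" where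
  "rho B S0 ST X = Inf {ereal m | m. (\<lambda>\<omega>. X \<omega> + m / S0 * ST \<omega>) \<in> B}"

end

theory Submission
  imports Defs
begin

lemma nn_fin:
  assumes "integrable M (g::'a\<Rightarrow>real)"
  shows "(\<integral>\<^sup>+ x. ennreal (g x) \<partial>M) < \<infinity>"
proof -
  have "(\<integral>\<^sup>+ x. ennreal (g x) \<partial>M) \<le> (\<integral>\<^sup>+ x. ennreal (norm (g x)) \<partial>M)"
    by (intro nn_integral_mono) (simp add: ennreal_leI)
  also have "\<dots> < \<infinity>" using assms by (simp add: integrable_iff_bounded)
  finally show ?thesis .
qed

lemma enn2ereal_fin: "(x::ennreal) < \<infinity> \<Longrightarrow> enn2ereal x = ereal (enn2real x)"
proof -
  assume "x < \<infinity>"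
  then have "enn2ereal x \<noteq> \<infinity>" by simp
  moreover have "enn2ereal x \<noteq> -\<infinity>" using enn2ereal_nonneg[of x] by auto
  ultimately show ?thesis unfolding enn2real_def by (cases "enn2ereal x") auto
qed

lemma E_real:
  assumes "integrable M g"
  shows "ereal_expectation M (\<lambda>\<omega>. ereal (g \<omega>)) = ereal (integral\<^sup>L M g)"
proof -
  have i2: "integrable M (\<lambda>x. - g x)" using assms by simp
  have e: "\<And>x. e2ennreal (- ereal x) = ennreal (- x)"
    by (metis e2ennreal_ereal uminus_ereal.simps(1))
  show ?thesis
    unfolding ereal_expectation_def real_lebesgue_integral_def[OF assms] e e2ennreal_ereal
    using enn2ereal_fin[OF nn_fin[OF assms]] enn2ereal_fin[OF nn_fin[OF i2]]
    by (simp only:) (simp only: ereal_minus(1))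
qed

lemma E_mono_le:
  assumes "AE \<omega> in M. f \<omega> \<le> h \<omega>"
  shows "ereal_expectation M f \<le> ereal_expectation M h"
  unfolding ereal_expectation_def
proof (rule ereal_minus_mono)
  show "enn2ereal (\<integral>\<^sup>+ \<omega>. e2ennreal (f \<omega>) \<partial>M) \<le> enn2ereal (\<integral>\<^sup>+ \<omega>. e2ennreal (h \<omega>) \<partial>M)"
    using assms by (intro less_eq_ennreal.rep_eq[THEN iffD1] nn_integral_mono_AE) (rule eventually_mono[OF assms], rule e2ennreal_mono, simp)
  show "enn2ereal (\<integral>\<^sup>+ \<omega>. e2ennreal (- h \<omega>) \<partial>M) \<le> enn2ereal (\<integral>\<^sup>+ \<omega>. e2ennreal (- f \<omega>) \<partial>M)"
    using assms by (intro less_eq_ennreal.rep_eq[THEN iffD1] nn_integral_mono_AE) (rule eventually_mono[OF assms], rule e2ennreal_mono, simp)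
qed

lemma int_simple:
  assumes "prob_space M" "B \<in> sets M"
  shows "integrable M (\<lambda>\<omega>. U + (b - U) * indicator B \<omega>)"
    "integral\<^sup>L M (\<lambda>\<omega>. U + (b - U) * indicator B \<omega>) = U + (b - U) * measure M B"
proof -
  interpret prob_space M by fact
  show i: "integrable M (\<lambda>\<omega>. U + (b - U) * indicator B \<omega>)"
    using assms(2) by (auto intro!: Bochner_Integration.integrable_add integrable_mult_right integrable_real_indicator simp: less_top[symmetric] prob_space)
  show "integral\<^sup>L M (\<lambda>\<omega>. U + (b - U) * indicator B \<omega>) = U + (b - U) * measure M B"
    using assms(2) by (subst Bochner_Integration.integral_add) (auto intro!: integrable_mult_right integrable_real_indicator simp: less_top[symmetric] prob_space)
qed

lemma E_upper:
  assumes "prob_space M" "B \<in> sets M"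
    "AE \<omega> in M. \<omega> \<in> B \<longrightarrow> f \<omega> \<le> ereal b"
    "AE \<omega> in M. \<omega> \<notin> B \<longrightarrow> f \<omega> \<le> ereal U"
  shows "ereal_expectation M f \<le> ereal (U + (b - U) * measure M B)"
proof -
  have "AE \<omega> in M. f \<omega> \<le> ereal (U + (b - U) * indicator B \<omega>)"
    using assms(3,4) by eventually_elim (auto simp: indicator_def)
  then have "ereal_expectation M f \<le> ereal_expectation M (\<lambda>\<omega>. ereal (U + (b - U) * indicator B \<omega>))"
    by (rule E_mono_le)
  also have "\<dots> = ereal (U + (b - U) * measure M B)"
    using int_simple[OF assms(1,2)] by (simp add: E_real)
  finally show ?thesis .
qed

lemma E_lower:
  assumes "prob_space M" "B \<in> sets M"
    "AE \<omega> in M. \<omega> \<in> B \<longrightarrow> ereal b \<le> f \<omega>"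
    "AE \<omega> in M. \<omega> \<notin> B \<longrightarrow> ereal U \<le> f \<omega>"
  shows "ereal (U + (b - U) * measure M B) \<le> ereal_expectation M f"
proof -
  have "AE \<omega> in M. ereal (U + (b - U) * indicator B \<omega>) \<le> f \<omega>"
    using assms(3,4) by eventually_elim (auto simp: indicator_def)
  then have "ereal_expectation M (\<lambda>\<omega>. ereal (U + (b - U) * indicator B \<omega>)) \<le> ereal_expectation M f"
    by (rule E_mono_le)
  moreover have "ereal_expectation M (\<lambda>\<omega>. ereal (U + (b - U) * indicator B \<omega>)) = ereal (U + (b - U) * measure M B)"
    using int_simple[OF assms(1,2)] by (simp add: E_real)
  ultimately show ?thesis by simp
qed


lemma util_unbounded:
  assumes "utility_function u"
  shows "\<exists>y. u y \<le> ereal b"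
proof -
  from assms have fin: "\<And>x. u x \<noteq> \<infinity>" and mono: "mono u"
    and conc: "\<And>x y t. 0 < t \<Longrightarrow> t < 1 \<Longrightarrow>
        ereal t * u x + ereal (1 - t) * u y \<le> u (t * x + (1 - t) * y)"
    unfolding utility_function_def by auto
  from assms obtain x1 y1 where "u x1 \<noteq> u y1" unfolding utility_function_def by auto
  then obtain x0 y0 where xy: "x0 < y0" "u x0 < u y0"
    using mono unfolding mono_def
    by (metis linorder_neqE_linordered_idom order_le_less)
  show ?thesis
  proof (cases "u x0 = -\<infinity>")
    case True then show ?thesis by (intro exI[of _ x0]) simp
  next
    case False
    then obtain p where p: "u x0 = ereal p" using fin[of x0] by (cases "u x0") auto
    obtain q where q: "u y0 = ereal q" using fin[of y0] xy(2) by (cases "u y0") auto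
    have pq: "p < q" using xy p q by simp
    define d where "d = (y0 - x0) / (q - p)"
    have d: "d > 0" using xy pq by (simp add: d_def)
    define z where "z = x0 - d * (\<bar>p - b\<bar> + 1)"
    have zx: "z < x0" using d by (simp add: z_def add_pos_nonneg)
    define t where "t = (y0 - x0) / (y0 - z)"
    have t0: "0 < t" "t < 1" using zx xy by (auto simp: t_def)
    have nz: "y0 - z \<noteq> 0" using zx xy by simp
    have omt: "1 - t = (x0 - z) / (y0 - z)" unfolding t_def using nz by (simp add: field_simps)
    have "t * z + (1 - t) * y0 = ((y0 - x0) * z + (x0 - z) * y0) / (y0 - z)"
      unfolding omt unfolding t_def by (simp add: add_divide_distrib)
    also have "\<dots> = x0 * (y0 - z) / (y0 - z)" by (simp add: algebra_simps)
    finally have xt: "t * z + (1 - t) * y0 = x0" using nz by simp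
    have c: "ereal t * u z + ereal (1 - t) * u y0 \<le> u x0"
      using conc[OF t0, of z y0] xt by simp
    show ?thesis
    proof (cases "u z")
      case (real r)
      have "t * r + (1 - t) * q \<le> p" using c real p q by simp
      hence "t * (r - p) \<le> (1 - t) * (p - q)" by (simp add: algebra_simps)
      hence "r - p \<le> (1 - t) / t * (p - q)" using t0 by (simp add: field_simps)
      also have "(1 - t) / t = (x0 - z) / (y0 - x0)"
        using nz xy unfolding omt unfolding t_def by simp
      also have "(x0 - z) / (y0 - x0) * (p - q) = - (\<bar>p - b\<bar> + 1)"
      proof -
        have n1: "y0 - x0 \<noteq> 0" "q - p \<noteq> 0" using xy pq by auto
        have "(x0 - z) / (y0 - x0) = (\<bar>p - b\<bar> + 1) / (q - p)"
          unfolding z_def d_def using n1 by simp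
        moreover have "(\<bar>p - b\<bar> + 1) / (q - p) * (p - q) = - (\<bar>p - b\<bar> + 1)"
          using n1 by (simp add: divide_simps) (simp add: algebra_simps)
        ultimately show ?thesis by simp
      qed
      finally have "r \<le> b" by linarith
      then show ?thesis using real by (intro exI[of _ z]) simp
    next
      case PInf then show ?thesis using fin by simp
    next
      case MInf then show ?thesis by (intro exI[of _ z]) simp
    qed
  qed
qed


lemma pos_level:
  assumes "prob_space M" "traded_asset M S0 ST"
  shows "\<exists>\<delta>>0. measure M {\<omega>\<in>space M. \<delta> \<le> ST \<omega>} > 0"
proof (rule ccontr)
  interpret prob_space M by fact
  have meas: "ST \<in> borel_measurable M" and nn: "AE \<omega> in M. ST \<omega> \<ge> 0"
    and nz: "\<not> (AE \<omega> in M. ST \<omega> = 0)"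
    using assms(2) unfolding traded_asset_def by auto
  assume neg: "\<not> ?thesis"
  have z: "measure M {\<omega>\<in>space M. 1 / Suc n \<le> ST \<omega>} = 0" for n::nat
  proof -
    have "(1::real) / Suc n > 0" by simp
    then have "\<not> (0 < measure M {\<omega>\<in>space M. 1 / Suc n \<le> ST \<omega>})" using neg by blast
    then show ?thesis using measure_nonneg[of M "{\<omega>\<in>space M. 1 / Suc n \<le> ST \<omega>}"] by linarith
  qed
  have "\<And>n::nat. AE \<omega> in M. \<not> (1 / Suc n \<le> ST \<omega>)"
    using z meas by (subst prob_Collect_eq_0[symmetric]) auto
  then have "AE \<omega> in M. \<forall>n::nat. \<not> (1 / Suc n \<le> ST \<omega>)"
    by (simp add: AE_all_countable)
  then have "AE \<omega> in M. ST \<omega> = 0"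
    using nn
  proof eventually_elim
    case (elim \<omega>)
    show ?case
    proof (rule ccontr)
      assume "ST \<omega> \<noteq> 0"
      then have "ST \<omega> > 0" using elim by simp
      then obtain k where k: "k > 0" "inverse (real k) < ST \<omega>" using ex_inverse_of_nat_less by blast
      then obtain n where "k = Suc n" using gr0_implies_Suc by blast
      then have "inverse (real (Suc n)) < ST \<omega>" using k by simp
      then have "1 / real (Suc n) \<le> ST \<omega>" by (simp add: inverse_eq_divide)
      then show False using elim(1) by blast
    qed
  qed
  then show False using nz by simp
qed

lemma bounded_below:
  assumes "prob_space M" "utility_function u" "\<forall>x. u x \<le> ereal c"
    "traded_asset M S0 ST" "X \<in> Linf M"
  shows "\<exists>L. \<forall>m. ereal \<alpha> \<le> ereal_expectation M (\<lambda>\<omega>. u (X \<omega> + m / S0 * ST \<omega>)) \<longrightarrow> L \<le> m"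
proof -
  interpret prob_space M by fact
  have meas: "ST \<in> borel_measurable M" and S0: "S0 > 0"
    using assms(4) unfolding traded_asset_def by auto
  have mono: "mono u" using assms(2) unfolding utility_function_def by auto
  obtain \<delta> where \<delta>: "\<delta> > 0" and p: "measure M {\<omega>\<in>space M. \<delta> \<le> ST \<omega>} > 0"
    using pos_level[OF assms(1,4)] by blast
  define B where "B = {\<omega>\<in>space M. \<delta> \<le> ST \<omega>}"
  define p where "p = measure M B"
  have Bs: "B \<in> sets M" unfolding B_def using meas by measurable
  have pp: "p > 0" using p unfolding p_def B_def .
  obtain C where C: "AE \<omega> in M. \<bar>X \<omega>\<bar> \<le> C" using assms(5) unfolding Linf_def by auto
  define b where "b = (\<alpha> - 1 - (1 - p) * c) / p"
  have bval: "c + (b - c) * p = \<alpha> - 1" unfolding b_def using pp by (simp add: field_simps)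
  obtain y0 where y0: "u y0 \<le> ereal b" using util_unbounded[OF assms(2)] by blast
  define L where "L = min 0 ((y0 - C) * S0 / \<delta>)"
  show ?thesis
  proof (intro exI[of _ L] allI impI)
    fix m assume acc: "ereal \<alpha> \<le> ereal_expectation M (\<lambda>\<omega>. u (X \<omega> + m / S0 * ST \<omega>))"
    show "L \<le> m"
    proof (rule ccontr)
      assume "\<not> L \<le> m"
      then have m0: "m \<le> 0" and m1: "m < (y0 - C) * S0 / \<delta>" unfolding L_def by auto
      have m2: "m / S0 * \<delta> < y0 - C" using m1 S0 \<delta> by (simp add: field_simps)
      have "ereal_expectation M (\<lambda>\<omega>. u (X \<omega> + m / S0 * ST \<omega>)) \<le> ereal (c + (b - c) * measure M B)"
      proof (rule E_upper[OF assms(1) Bs])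
        show "AE \<omega> in M. \<omega> \<in> B \<longrightarrow> u (X \<omega> + m / S0 * ST \<omega>) \<le> ereal b"
          using C
        proof eventually_elim
          case (elim \<omega>)
          show ?case
          proof
            assume "\<omega> \<in> B"
            then have "\<delta> \<le> ST \<omega>" unfolding B_def by auto
            moreover have "m / S0 \<le> 0" using m0 S0 by (simp add: divide_nonpos_pos)
            ultimately have "m / S0 * ST \<omega> \<le> m / S0 * \<delta>" by (rule mult_left_mono_neg)
            then have "X \<omega> + m / S0 * ST \<omega> \<le> y0" using elim m2 by linarith
            then have "u (X \<omega> + m / S0 * ST \<omega>) \<le> u y0" using mono by (simp add: monoD)
            then show "u (X \<omega> + m / S0 * ST \<omega>) \<le> ereal b" using y0 by simp
          qed
        qed
        show "AE \<omega> in M. \<omega> \<notin> B \<longrightarrow> u (X \<omega> + m / S0 * ST \<omega>) \<le> ereal c"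
          using assms(3) by simp
      qed
      also have "\<dots> = ereal (\<alpha> - 1)" using bval unfolding p_def by simp
      finally have "ereal \<alpha> \<le> ereal (\<alpha> - 1)" by (rule order.trans[OF acc])
      then show False by simp
    qed
  qed
qed


lemma Linf_const: "(\<lambda>\<omega>. c) \<in> Linf M"
  unfolding Linf_def by (auto intro!: exI[of _ "\<bar>c\<bar>"])

lemma Linf_shift:
  assumes "X \<in> Linf M" "ST \<in> Linf M"
  shows "(\<lambda>\<omega>. X \<omega> + k * ST \<omega>) \<in> Linf M"
proof -
  obtain C1 where C1: "AE \<omega> in M. \<bar>X \<omega>\<bar> \<le> C1" using assms(1) unfolding Linf_def by auto
  obtain C2 where C2: "AE \<omega> in M. \<bar>ST \<omega>\<bar> \<le> C2" using assms(2) unfolding Linf_def by auto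
  have "AE \<omega> in M. \<bar>X \<omega> + k * ST \<omega>\<bar> \<le> C1 + \<bar>k\<bar> * C2"
    using C1 C2
  proof eventually_elim
    case (elim \<omega>)
    have "\<bar>X \<omega> + k * ST \<omega>\<bar> \<le> \<bar>X \<omega>\<bar> + \<bar>k\<bar> * \<bar>ST \<omega>\<bar>"
      by (metis abs_mult abs_triangle_ineq)
    also have "\<dots> \<le> C1 + \<bar>k\<bar> * C2" using elim by (intro add_mono mult_left_mono) auto
    finally show ?case .
  qed
  moreover have "(\<lambda>\<omega>. X \<omega> + k * ST \<omega>) \<in> borel_measurable M"
    using assms unfolding Linf_def by auto
  ultimately show ?thesis unfolding Linf_def by blast
qed

lemma fin_iff:
  assumes "prob_space M" "utility_function u" "\<forall>x. u x \<le> ereal c"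
    "traded_asset M S0 ST" "ST \<in> Linf M" "X \<in> Linf M"
  shows "\<bar>rho (utility_acceptance_set M u \<alpha>) S0 ST X\<bar> \<noteq> \<infinity> \<longleftrightarrow>
     (\<exists>m. ereal \<alpha> \<le> ereal_expectation M (\<lambda>\<omega>. u (X \<omega> + m / S0 * ST \<omega>)))"
proof -
  have mem: "(\<lambda>\<omega>. X \<omega> + m / S0 * ST \<omega>) \<in> utility_acceptance_set M u \<alpha> \<longleftrightarrow>
      ereal \<alpha> \<le> ereal_expectation M (\<lambda>\<omega>. u (X \<omega> + m / S0 * ST \<omega>))" for m
    using Linf_shift[OF assms(6,5), of "m / S0"] unfolding utility_acceptance_set_def by simp
  define P where "P m \<longleftrightarrow> ereal \<alpha> \<le> ereal_expectation M (\<lambda>\<omega>. u (X \<omega> + m / S0 * ST \<omega>))" for m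
  have r: "rho (utility_acceptance_set M u \<alpha>) S0 ST X = Inf {ereal m | m. P m}"
    unfolding rho_def mem P_def ..
  obtain L where L: "\<And>m. P m \<Longrightarrow> L \<le> m"
    using bounded_below[OF assms(1-4,6), of \<alpha>] unfolding P_def by blast
  show ?thesis unfolding r P_def[symmetric]
  proof
    assume fin: "\<bar>Inf {ereal m | m. P m}\<bar> \<noteq> \<infinity>"
    show "\<exists>m. P m"
    proof (rule ccontr)
      assume "\<not> (\<exists>m. P m)"
      then have "{ereal m | m. P m} = {}" by auto
      then show False using fin by (simp add: top_ereal_def)
    qed
  next
    assume "\<exists>m. P m"
    then obtain m0 where m0: "P m0" by blast
    have "Inf {ereal m | m. P m} \<le> ereal m0" using m0 by (intro Inf_lower) auto
    moreover have "ereal L \<le> Inf {ereal m | m. P m}" using L by (intro Inf_greatest) auto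
    ultimately show "\<bar>Inf {ereal m | m. P m}\<bar> \<noteq> \<infinity>" by auto
  qed
qed


lemma bad_b:
  fixes p c \<alpha> :: real
  assumes "p > 0"
  shows "c + ((\<alpha> - 1 - (1 - p) * c) / p - c) * p = \<alpha> - 1"
  using assms by (simp add: field_simps)

lemma part1:
  assumes "prob_space M" "utility_function u" "\<forall>x. u x \<le> ereal c"
    "traded_asset M S0 ST"
    "\<forall>X\<in>Linf M. \<exists>m. ereal \<alpha> \<le> ereal_expectation M (\<lambda>\<omega>. u (X \<omega> + m / S0 * ST \<omega>))"
  shows "measure M {\<omega>\<in>space M. ST \<omega> = 0} = 0"
proof (rule ccontr)
  interpret prob_space M by fact
  have meas: "ST \<in> borel_measurable M"
    using assms(4) unfolding traded_asset_def by auto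
  have mono: "mono u" using assms(2) unfolding utility_function_def by auto
  define B where "B = {\<omega>\<in>space M. ST \<omega> = 0}"
  have Bs: "B \<in> sets M" unfolding B_def using meas by measurable
  assume "measure M {\<omega>\<in>space M. ST \<omega> = 0} \<noteq> 0"
  then have pp: "measure M B > 0" unfolding B_def using measure_nonneg[of M] by (simp add: order_less_le)
  define b where "b = (\<alpha> - 1 - (1 - measure M B) * c) / measure M B"
  obtain y0 where y0: "u y0 \<le> ereal b" using util_unbounded[OF assms(2)] by blast
  have "\<exists>m. ereal \<alpha> \<le> ereal_expectation M (\<lambda>\<omega>. u (y0 + m / S0 * ST \<omega>))"
    using bspec[OF assms(5) Linf_const[of y0 M]] by simp
  then obtain m where acc: "ereal \<alpha> \<le> ereal_expectation M (\<lambda>\<omega>. u (y0 + m / S0 * ST \<omega>))" by blast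
  have "ereal_expectation M (\<lambda>\<omega>. u (y0 + m / S0 * ST \<omega>)) \<le> ereal (c + (b - c) * measure M B)"
  proof (rule E_upper[OF assms(1) Bs])
    show "AE \<omega> in M. \<omega> \<in> B \<longrightarrow> u (y0 + m / S0 * ST \<omega>) \<le> ereal b"
      using y0 unfolding B_def by simp
    show "AE \<omega> in M. \<omega> \<notin> B \<longrightarrow> u (y0 + m / S0 * ST \<omega>) \<le> ereal c"
      using assms(3) by simp
  qed
  also have "\<dots> = ereal (\<alpha> - 1)" unfolding b_def using bad_b[OF pp] by simp
  finally have "ereal \<alpha> \<le> ereal (\<alpha> - 1)" by (rule order.trans[OF acc])
  then show False by simp
qed

lemma part3:
  assumes "prob_space M" "utility_function u" "\<exists>x. ereal \<alpha> \<le> u x"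
    "traded_asset M S0 ST" "\<epsilon> > 0" "measure M {\<omega>\<in>space M. \<epsilon> \<le> ST \<omega>} = 1"
    "X \<in> Linf M"
  shows "\<exists>m. ereal \<alpha> \<le> ereal_expectation M (\<lambda>\<omega>. u (X \<omega> + m / S0 * ST \<omega>))"
proof -
  interpret prob_space M by fact
  have S0: "S0 > 0" using assms(4) unfolding traded_asset_def by auto
  have mono: "mono u" using assms(2) unfolding utility_function_def by auto
  obtain x0 where x0: "ereal \<alpha> \<le> u x0" using assms(3) by blast
  obtain C where C: "AE \<omega> in M. \<bar>X \<omega>\<bar> \<le> C" using assms(7) unfolding Linf_def by auto
  have ae: "AE \<omega> in M. \<omega> \<in> {\<omega>\<in>space M. \<epsilon> \<le> ST \<omega>}" by (rule AE_prob_1[OF assms(6)])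
  define k where "k = max 0 ((x0 + C) / \<epsilon>)"
  have k0: "k \<ge> 0" unfolding k_def by simp
  have kk: "k * \<epsilon> \<ge> x0 + C"
  proof -
    have "(x0 + C) / \<epsilon> \<le> k" unfolding k_def by simp
    then have "(x0 + C) / \<epsilon> * \<epsilon> \<le> k * \<epsilon>" using assms(5) by (intro mult_right_mono) auto
    then show ?thesis using assms(5) by simp
  qed
  have mk: "S0 * k / S0 = k" using S0 by simp
  have "ereal (\<alpha> + (\<alpha> - \<alpha>) * measure M {}) \<le> ereal_expectation M (\<lambda>\<omega>. u (X \<omega> + (S0 * k) / S0 * ST \<omega>))"
  proof (rule E_lower[OF assms(1)])
    show "AE \<omega> in M. \<omega> \<in> {} \<longrightarrow> ereal \<alpha> \<le> u (X \<omega> + S0 * k / S0 * ST \<omega>)" by simp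
    show "AE \<omega> in M. \<omega> \<notin> {} \<longrightarrow> ereal \<alpha> \<le> u (X \<omega> + S0 * k / S0 * ST \<omega>)"
      using C ae
    proof eventually_elim
      case (elim \<omega>)
      have "k * \<epsilon> \<le> k * ST \<omega>" using elim k0 by (intro mult_left_mono) auto
      then have "x0 \<le> X \<omega> + k * ST \<omega>" using kk elim by linarith
      then have "u x0 \<le> u (X \<omega> + S0 * k / S0 * ST \<omega>)" using mono mk by (simp add: monoD)
      then show ?case using x0 by simp
    qed
  qed simp
  then have "ereal \<alpha> \<le> ereal_expectation M (\<lambda>\<omega>. u (X \<omega> + (S0 * k) / S0 * ST \<omega>))" by simp
  then show ?thesis by (rule exI)
qed


lemma small_set:
  assumes "prob_space M" "traded_asset M S0 ST" "measure M {\<omega>\<in>space M. ST \<omega> = 0} = 0" "q > 0"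
  shows "\<exists>n::nat. measure M {\<omega>\<in>space M. ST \<omega> \<le> 1 / Suc n} < q"
proof -
  interpret prob_space M by fact
  have meas: "ST \<in> borel_measurable M" and nn: "AE \<omega> in M. ST \<omega> \<ge> 0"
    using assms(2) unfolding traded_asset_def by auto
  define B where "B n = {\<omega>\<in>space M. ST \<omega> \<le> 1 / Suc n}" for n :: nat
  have Bs: "range B \<subseteq> sets M" unfolding B_def using meas by auto
  have dec: "antimono B"
  proof (rule antimonoI)
    fix m n :: nat assume mn: "m \<le> n"
    have "1 / real (Suc n) \<le> 1 / real (Suc m)" using mn by (intro divide_left_mono) auto
    then show "B n \<subseteq> B m" unfolding B_def by auto
  qed
  have int: "(\<Inter>n. B n) \<subseteq> {\<omega>\<in>space M. ST \<omega> < 0} \<union> {\<omega>\<in>space M. ST \<omega> = 0}"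
  proof
    fix x assume x: "x \<in> (\<Inter>n. B n)"
    then have sp: "x \<in> space M" and le: "\<And>n. ST x \<le> 1 / Suc n" unfolding B_def by auto
    have "ST x \<le> 0"
    proof (rule ccontr)
      assume "\<not> ST x \<le> 0"
      then have "0 < ST x" by simp
      then obtain k where k: "k > 0" "inverse (real k) < ST x" using ex_inverse_of_nat_less by blast
      then obtain n where "k = Suc n" using gr0_implies_Suc by blast
      then show False using le[of n] k by (simp add: inverse_eq_divide)
    qed
    then show "x \<in> {\<omega>\<in>space M. ST \<omega> < 0} \<union> {\<omega>\<in>space M. ST \<omega> = 0}" using sp by auto
  qed
  have neg0: "measure M {\<omega>\<in>space M. ST \<omega> < 0} = 0"
    using nn meas by (subst prob_Collect_eq_0) (auto elim: eventually_mono)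
  have "measure M (\<Inter>n. B n) \<le> measure M ({\<omega>\<in>space M. ST \<omega> < 0} \<union> {\<omega>\<in>space M. ST \<omega> = 0})"
    using int meas by (intro finite_measure_mono) auto
  also have "\<dots> \<le> measure M {\<omega>\<in>space M. ST \<omega> < 0} + measure M {\<omega>\<in>space M. ST \<omega> = 0}"
    using meas by (intro measure_Un_le) auto
  finally have lim0: "measure M (\<Inter>n. B n) \<le> 0" using neg0 assms(3) by simp
  have "(\<lambda>n. measure M (B n)) \<longlonglongrightarrow> measure M (\<Inter>n. B n)"
    by (rule finite_Lim_measure_decseq[OF Bs dec])
  moreover have "measure M (\<Inter>n. B n) < q" using lim0 assms(4) by simp
  ultimately have "eventually (\<lambda>n. measure M (B n) < q) sequentially" by (rule order_tendstoD)
  then obtain N where "\<forall>n\<ge>N. measure M (B n) < q" unfolding eventually_sequentially by blast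
  then have "measure M (B N) < q" by simp
  then show ?thesis unfolding B_def by blast
qed


lemma arith_q:
  fixes w v \<alpha> P :: real
  assumes "w > \<alpha>" "0 \<le> P" "P < (w - \<alpha>) / (\<bar>w - v\<bar> + 1)"
  shows "\<alpha> \<le> w + (v - w) * P"
proof (cases "w - v \<le> 0")
  case True
  then have "0 \<le> (v - w) * P" using assms(2) by simp
  then show ?thesis using assms(1) by linarith
next
  case False
  then have "(w - v) * P \<le> (w - v) * ((w - \<alpha>) / (\<bar>w - v\<bar> + 1))"
    using assms(3) by (intro mult_left_mono) auto
  also have "\<dots> = (w - \<alpha>) * ((w - v) / (\<bar>w - v\<bar> + 1))" by simp
  also have "\<dots> \<le> (w - \<alpha>) * 1"
    using assms(1) False by (intro mult_left_mono) auto
  finally show ?thesis by (simp add: algebra_simps)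
qed

lemma part2:
  assumes "prob_space M" "utility_function u" "\<forall>x. u x \<noteq> -\<infinity>" "ereal \<alpha> < u x1"
    "traded_asset M S0 ST" "measure M {\<omega>\<in>space M. ST \<omega> = 0} = 0"
    "X \<in> Linf M"
  shows "\<exists>m. ereal \<alpha> \<le> ereal_expectation M (\<lambda>\<omega>. u (X \<omega> + m / S0 * ST \<omega>))"
proof -
  interpret prob_space M by fact
  have S0: "S0 > 0" and meas: "ST \<in> borel_measurable M" and nn: "AE \<omega> in M. ST \<omega> \<ge> 0"
    using assms(5) unfolding traded_asset_def by auto
  have mono: "mono u" and fin: "\<And>x. u x \<noteq> \<infinity>" using assms(2) unfolding utility_function_def by auto
  obtain C where C: "AE \<omega> in M. \<bar>X \<omega>\<bar> \<le> C" using assms(7) unfolding Linf_def by auto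
  obtain v where v: "u (-C) = ereal v" using fin[of "-C"] assms(3) by (cases "u (-C)") auto
  obtain w where w: "u x1 = ereal w" using fin[of x1] assms(3) by (cases "u x1") auto
  have wa: "w > \<alpha>" using assms(4) w by simp
  define q where "q = (w - \<alpha>) / (\<bar>w - v\<bar> + 1)"
  have q0: "q > 0" unfolding q_def using wa by (simp add: add_nonneg_pos)
  obtain n :: nat where n: "measure M {\<omega>\<in>space M. ST \<omega> \<le> 1 / Suc n} < q"
    using small_set[OF assms(1,5,6) q0] by blast
  define B where "B = {\<omega>\<in>space M. ST \<omega> \<le> 1 / Suc n}"
  have Bs: "B \<in> sets M" unfolding B_def using meas by measurable
  define k where "k = real (Suc n) * max 1 (x1 + C)"
  have k0: "k > 0" unfolding k_def by (simp add: less_max_iff_disj)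
  have mk: "S0 * k / S0 = k" using S0 by simp
  have "ereal (w + (v - w) * measure M B) \<le> ereal_expectation M (\<lambda>\<omega>. u (X \<omega> + (S0 * k) / S0 * ST \<omega>))"
  proof (rule E_lower[OF assms(1) Bs])
    show "AE \<omega> in M. \<omega> \<in> B \<longrightarrow> ereal v \<le> u (X \<omega> + S0 * k / S0 * ST \<omega>)"
      using C nn
    proof eventually_elim
      case (elim \<omega>)
      have "0 \<le> k * ST \<omega>" using elim k0 by simp
      then have "-C \<le> X \<omega> + k * ST \<omega>" using elim by linarith
      then have "u (-C) \<le> u (X \<omega> + S0 * k / S0 * ST \<omega>)" using mono mk by (simp add: monoD)
      then show ?case using v by simp
    qed
    show "AE \<omega> in M. \<omega> \<notin> B \<longrightarrow> ereal w \<le> u (X \<omega> + S0 * k / S0 * ST \<omega>)"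
      using C AE_space
    proof eventually_elim
      case (elim \<omega>)
      show ?case
      proof
        assume "\<omega> \<notin> B"
        then have st: "1 / Suc n < ST \<omega>" using elim unfolding B_def by auto
        have "k * (1 / Suc n) \<le> k * ST \<omega>" using st k0 by (intro mult_left_mono) auto
        moreover have "k * (1 / Suc n) = max 1 (x1 + C)" unfolding k_def by simp
        ultimately have "x1 \<le> X \<omega> + k * ST \<omega>" using elim by linarith
        then have "u x1 \<le> u (X \<omega> + S0 * k / S0 * ST \<omega>)" using mono mk by (simp add: monoD)
        then show "ereal w \<le> u (X \<omega> + S0 * k / S0 * ST \<omega>)" using w by simp
      qed
    qed
  qed
  moreover have "\<alpha> \<le> w + (v - w) * measure M B"
    using arith_q[OF wa measure_nonneg] n unfolding B_def q_def by blast
  ultimately have "ereal \<alpha> \<le> ereal_expectation M (\<lambda>\<omega>. u (X \<omega> + (S0 * k) / S0 * ST \<omega>))"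
    by (meson ereal_less_eq(3) order.trans)
  then show ?thesis by (rule exI)
qed


lemma part4:
  assumes "prob_space M" "utility_function u" "\<forall>x. u x \<le> ereal c"
    "(\<exists>x. u x = -\<infinity>) \<or> (\<forall>x. u x \<le> ereal \<alpha>)"
    "traded_asset M S0 ST"
    "\<forall>X\<in>Linf M. \<exists>m. ereal \<alpha> \<le> ereal_expectation M (\<lambda>\<omega>. u (X \<omega> + m / S0 * ST \<omega>))"
  shows "\<exists>\<epsilon>>0. measure M {\<omega>\<in>space M. \<epsilon> \<le> ST \<omega>} = 1"
proof (rule ccontr)
  interpret prob_space M by fact
  assume neg: "\<not> ?thesis"
  have S0: "S0 > 0" and meas: "ST \<in> borel_measurable M" and nn: "AE \<omega> in M. ST \<omega> \<ge> 0"
    using assms(5) unfolding traded_asset_def by auto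
  have mono: "mono u" using assms(2) unfolding utility_function_def by auto
  obtain a0 U where U: "\<forall>x. u x \<le> ereal U" and
    ab: "\<And>p. p > 0 \<Longrightarrow> \<exists>b. (\<forall>y\<le>a0. u y \<le> ereal b) \<and> U + (b - U) * p < \<alpha>"
  proof (cases "\<exists>x. u x = -\<infinity>")
    case True
    then obtain a where a: "u a = -\<infinity>" by blast
    have "\<exists>b. (\<forall>y\<le>a. u y \<le> ereal b) \<and> c + (b - c) * p < \<alpha>" if "p > 0" for p
    proof (intro exI conjI allI impI)
      fix y assume "y \<le> a"
      then have "u y \<le> u a" using mono by (simp add: monoD)
      then show "u y \<le> ereal ((\<alpha> - 1 - (1 - p) * c) / p)" using a by simp
    next
      show "c + ((\<alpha> - 1 - (1 - p) * c) / p - c) * p < \<alpha>" using bad_b[OF that] by simp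
    qed
    then show ?thesis using that assms(3) by blast
  next
    case False
    then have ua: "\<forall>x. u x \<le> ereal \<alpha>" using assms(4) by blast
    obtain y0 where y0: "u y0 \<le> ereal (\<alpha> - 1)" using util_unbounded[OF assms(2)] by blast
    have "\<exists>b. (\<forall>y\<le>y0. u y \<le> ereal b) \<and> \<alpha> + (b - \<alpha>) * p < \<alpha>" if "p > 0" for p
    proof (intro exI conjI allI impI)
      fix y assume "y \<le> y0"
      then have "u y \<le> u y0" using mono by (simp add: monoD)
      then show "u y \<le> ereal (\<alpha> - 1)" using y0 by simp
    next
      show "\<alpha> + (\<alpha> - 1 - \<alpha>) * p < \<alpha>" using that by simp
    qed
    then show ?thesis using that ua by blast
  qed
  have "\<exists>m. ereal \<alpha> \<le> ereal_expectation M (\<lambda>\<omega>. u (a0 - 1 + m / S0 * ST \<omega>))"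
    using bspec[OF assms(6) Linf_const[of "a0 - 1" M]] by simp
  then obtain m where acc: "ereal \<alpha> \<le> ereal_expectation M (\<lambda>\<omega>. u (a0 - 1 + m / S0 * ST \<omega>))" by blast
  have key: False if Bs: "B \<in> sets M" and Bp: "measure M B > 0"
    and Bae: "AE \<omega> in M. \<omega> \<in> B \<longrightarrow> a0 - 1 + m / S0 * ST \<omega> \<le> a0" for B
  proof -
    obtain b where b: "\<forall>y\<le>a0. u y \<le> ereal b" "U + (b - U) * measure M B < \<alpha>" using ab[OF Bp] by blast
    have "ereal_expectation M (\<lambda>\<omega>. u (a0 - 1 + m / S0 * ST \<omega>)) \<le> ereal (U + (b - U) * measure M B)"
    proof (rule E_upper[OF assms(1) Bs])
      show "AE \<omega> in M. \<omega> \<in> B \<longrightarrow> u (a0 - 1 + m / S0 * ST \<omega>) \<le> ereal b"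
        using Bae by eventually_elim (use b(1) in blast)
      show "AE \<omega> in M. \<omega> \<notin> B \<longrightarrow> u (a0 - 1 + m / S0 * ST \<omega>) \<le> ereal U"
        using U by simp
    qed
    then have "ereal \<alpha> \<le> ereal (U + (b - U) * measure M B)" by (rule order.trans[OF acc])
    then show False using b(2) by simp
  qed
  show False
  proof (cases "m \<le> 0")
    case True
    have "m / S0 \<le> 0" using True S0 by (simp add: divide_nonpos_pos)
    show False
    proof (rule key[of "space M"])
      show "measure M (space M) > 0" by (simp add: prob_space)
      show "AE \<omega> in M. \<omega> \<in> space M \<longrightarrow> a0 - 1 + m / S0 * ST \<omega> \<le> a0"
        using nn
      proof eventually_elim
        case (elim \<omega>)
        have "m / S0 * ST \<omega> \<le> 0" using mult_nonpos_nonneg[OF \<open>m / S0 \<le> 0\<close> elim] .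
        then show ?case by simp
      qed
    qed simp
  next
    case False
    define k where "k = m / S0"
    have k0: "k > 0" using False S0 unfolding k_def by simp
    have ne: "measure M {\<omega>\<in>space M. 1 / k \<le> ST \<omega>} \<noteq> 1" using neg k0 by auto
    have s1: "{\<omega>\<in>space M. 1 / k \<le> ST \<omega>} \<in> sets M" using meas by measurable
    define B where "B = space M - {\<omega>\<in>space M. 1 / k \<le> ST \<omega>}"
    have Bs: "B \<in> sets M" unfolding B_def using s1 by auto
    have "measure M B = 1 - measure M {\<omega>\<in>space M. 1 / k \<le> ST \<omega>}"
      unfolding B_def using prob_compl[OF s1] .
    moreover have "measure M {\<omega>\<in>space M. 1 / k \<le> ST \<omega>} \<le> 1" by simp
    ultimately have Bp: "measure M B > 0" using ne by linarith
    show False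
    proof (rule key[OF Bs Bp])
      show "AE \<omega> in M. \<omega> \<in> B \<longrightarrow> a0 - 1 + m / S0 * ST \<omega> \<le> a0"
      proof (rule AE_I2, rule impI)
        fix \<omega> assume "\<omega> \<in> B"
        then have "ST \<omega> < 1 / k" unfolding B_def by auto
        then have "k * ST \<omega> < k * (1 / k)" using k0 by (intro mult_strict_left_mono) auto
        then have "k * ST \<omega> < 1" using k0 by simp
        then show "a0 - 1 + m / S0 * ST \<omega> \<le> a0" unfolding k_def by simp
      qed
    qed
  qed
qed

theorem proposition6p1:
  fixes M :: "'a measure" and u :: "real \<Rightarrow> ereal" and \<alpha> S0 :: real
    and ST :: "'a \<Rightarrow> real"
  assumes "prob_space M" and "nonatomic M"
    and "utility_function u"
    and "\<exists>c::real. \<forall>x. u x \<le> ereal c"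
    and "\<exists>x. ereal \<alpha> \<le> u x"
    and "traded_asset M S0 ST" and "ST \<in> Linf M"
  shows "((\<forall>x. u x \<noteq> -\<infinity>) \<and> (\<exists>x. ereal \<alpha> < u x) \<longrightarrow>
            ((\<forall>X\<in>Linf M. \<bar>rho (utility_acceptance_set M u \<alpha>) S0 ST X\<bar> \<noteq> \<infinity>)
              \<longleftrightarrow> measure M {\<omega>\<in>space M. ST \<omega> = 0} = 0))
       \<and> ((\<exists>x. u x = -\<infinity>) \<or> (\<forall>x. u x \<le> ereal \<alpha>) \<longrightarrow>
            ((\<forall>X\<in>Linf M. \<bar>rho (utility_acceptance_set M u \<alpha>) S0 ST X\<bar> \<noteq> \<infinity>)
              \<longleftrightarrow> (\<exists>\<epsilon>>0. measure M {\<omega>\<in>space M. ST \<omega> \<ge> \<epsilon>} = 1)))"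
proof -
  obtain c where c: "\<forall>x. u x \<le> ereal c" using assms(4) by blast
  have Q: "(\<forall>X\<in>Linf M. \<bar>rho (utility_acceptance_set M u \<alpha>) S0 ST X\<bar> \<noteq> \<infinity>) \<longleftrightarrow>
     (\<forall>X\<in>Linf M. \<exists>m. ereal \<alpha> \<le> ereal_expectation M (\<lambda>\<omega>. u (X \<omega> + m / S0 * ST \<omega>)))"
    by (rule ball_cong[OF refl], rule fin_iff[OF assms(1,3) c assms(6,7)])
  show ?thesis
  proof (intro conjI impI)
    assume h: "(\<forall>x. u x \<noteq> -\<infinity>) \<and> (\<exists>x. ereal \<alpha> < u x)"
    then obtain x1 where x1: "ereal \<alpha> < u x1" by blast
    show "(\<forall>X\<in>Linf M. \<bar>rho (utility_acceptance_set M u \<alpha>) S0 ST X\<bar> \<noteq> \<infinity>) \<longleftrightarrow>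
        measure M {\<omega>\<in>space M. ST \<omega> = 0} = 0"
      unfolding Q
    proof
      assume "\<forall>X\<in>Linf M. \<exists>m. ereal \<alpha> \<le> ereal_expectation M (\<lambda>\<omega>. u (X \<omega> + m / S0 * ST \<omega>))"
      then show "measure M {\<omega>\<in>space M. ST \<omega> = 0} = 0" by (rule part1[OF assms(1,3) c assms(6)])
    next
      assume z: "measure M {\<omega>\<in>space M. ST \<omega> = 0} = 0"
      show "\<forall>X\<in>Linf M. \<exists>m. ereal \<alpha> \<le> ereal_expectation M (\<lambda>\<omega>. u (X \<omega> + m / S0 * ST \<omega>))"
        using part2[OF assms(1,3) conjunct1[OF h] x1 assms(6) z] by blast
    qed
  next
    assume h: "(\<exists>x. u x = -\<infinity>) \<or> (\<forall>x. u x \<le> ereal \<alpha>)"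
    show "(\<forall>X\<in>Linf M. \<bar>rho (utility_acceptance_set M u \<alpha>) S0 ST X\<bar> \<noteq> \<infinity>) \<longleftrightarrow>
        (\<exists>\<epsilon>>0. measure M {\<omega>\<in>space M. ST \<omega> \<ge> \<epsilon>} = 1)"
      unfolding Q
    proof
      assume "\<forall>X\<in>Linf M. \<exists>m. ereal \<alpha> \<le> ereal_expectation M (\<lambda>\<omega>. u (X \<omega> + m / S0 * ST \<omega>))"
      then show "\<exists>\<epsilon>>0. measure M {\<omega>\<in>space M. ST \<omega> \<ge> \<epsilon>} = 1" by (rule part4[OF assms(1,3) c h assms(6)])
    next
      assume "\<exists>\<epsilon>>0. measure M {\<omega>\<in>space M. ST \<omega> \<ge> \<epsilon>} = 1"
      then obtain \<epsilon> where e: "\<epsilon> > 0" "measure M {\<omega>\<in>space M. \<epsilon> \<le> ST \<omega>} = 1" by blast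
      show "\<forall>X\<in>Linf M. \<exists>m. ereal \<alpha> \<le> ereal_expectation M (\<lambda>\<omega>. u (X \<omega> + m / S0 * ST \<omega>))"
        using part3[OF assms(1,3,5,6) e] by blast
    qed
  qed
qed

end
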